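(* Let $I\subset\mathbb{R}$ be an open interval and let $f:I\to\mathbb{R}$ be a strictly convex function of class $C^{3}$ (i.e. $f''>0$ on $I$), with graph $X$. Then $f$ is a quadratic polynomial if and only if $X$ satisfies the following Condition (B): for every sufficiently small $k>0$, letting $X_k$ denote the graph of $y=f(x)+k$, for every point $V$ on $X_k$ the tangent line to $X_k$ at $V$ meets $X$ at two points $A$ and $B$, and the area of the region bounded by $X$ and the chord $AB$ is a number $\phi(k)$ depending only on $k$ (independent of the choice of $V$).
   Context: The "region bounded by $X$ and the chord $AB$" is the region enclosed by the arc of $X$ between $A$ and $B$ and the segment $AB$. *)

theory Defs
  imports "HOL-Analysis.Analysis"
begin

definition tangent_line :: "(real \<Rightarrow> real) \<Rightarrow> real \<Rightarrow> real \<Rightarrow> real \<Rightarrow> real" where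
  "tangent_line f k v x = f v + k + deriv f v * (x - v)"

definition condition_B :: "real set \<Rightarrow> (real \<Rightarrow> real) \<Rightarrow> bool" where
  "condition_B I f \<longleftrightarrow>
     (\<exists>\<delta>>0. \<exists>\<phi> :: real \<Rightarrow> real. \<forall>k. 0 < k \<and> k < \<delta> \<longrightarrow>
        (\<forall>v\<in>I. \<forall>\<alpha> \<beta>. \<alpha> < \<beta> \<and> {x\<in>I. f x = tangent_line f k v x} = {\<alpha>, \<beta>} \<longrightarrow>
            integral {\<alpha>..\<beta>} (\<lambda>x. tangent_line f k v x - f x) = \<phi> k))"

end

theory Submission
  imports Defs
begin

lemma quad_integral:
  fixes c k h v :: real
  assumes "c > 0" "h \<ge> 0" "c * h^2 = k"
  shows "((\<lambda>x. k - c * (x - v)^2) has_integral (4/3 * k * h)) {v-h..v+h}"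
proof -
  have "((\<lambda>x. k - c * (x - v)^2) has_integral
     ((\<lambda>x. k * x - c * (x - v)^3 / 3) (v+h) - (\<lambda>x. k * x - c * (x - v)^3 / 3) (v-h))) {v-h..v+h}"
    apply (rule fundamental_theorem_of_calculus)
    using assms apply simp
  proof -
    fix x :: real
    have "((\<lambda>x. k * x - c * (x - v)^3 / 3) has_real_derivative (k - c * (x - v)^2)) (at x)"
      by (rule derivative_eq_intros refl | simp add: power2_eq_square)+
    thus "((\<lambda>x. k * x - c * (x - v)^3 / 3) has_vector_derivative (k - c * (x - v)^2)) (at x within {v-h..v+h})"
      using has_real_derivative_iff_has_vector_derivative has_vector_derivative_at_within by blast
  qed
  moreover have "(\<lambda>x. k * x - c * (x - v)^3 / 3) (v+h) - (\<lambda>x. k * x - c * (x - v)^3 / 3) (v-h) = 4/3*k*h"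
    using assms(3) by (simp add: power3_eq_cube power2_eq_square algebra_simps) 
  ultimately show ?thesis by metis
qed

lemma area_bounds:
  fixes g :: "real \<Rightarrow> real"
  assumes "\<alpha> < v" "v < \<beta>" "0 < m" "m \<le> M" "0 < k" "continuous_on {\<alpha>..\<beta>} g"
    "g \<alpha> = k" "g \<beta> = k"
    and b: "\<And>x. x \<in> {\<alpha>..\<beta>} \<Longrightarrow> m/2*(x-v)^2 \<le> g x \<and> g x \<le> M/2*(x-v)^2 \<and> g x \<le> k"
  shows "4/3*k* sqrt(2*k/M) \<le> integral {\<alpha>..\<beta>} (\<lambda>x. k - g x)
     \<and> integral {\<alpha>..\<beta>} (\<lambda>x. k - g x) \<le> 4/3*k* sqrt(2*k/m)"
proof
  have M0: "M > 0" using assms by linarith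
  define h where "h = sqrt(2*k/M)"
  have h0: "h \<ge> 0" unfolding h_def using M0 assms by simp
  have hk: "M/2 * h^2 = k" unfolding h_def using M0 assms by simp
  have "k \<le> M/2*(\<alpha>-v)^2" using b[of \<alpha>] assms by auto
  hence "M/2*h^2 \<le> M/2*(\<alpha>-v)^2" using hk by simp
  hence "h^2 \<le> (\<alpha>-v)^2" using M0 by (simp add: mult_le_cancel_left_pos)
  hence "h \<le> v - \<alpha>" using h0 assms(1) by (metis power2_commute power2_le_imp_le less_eq_real_def diff_ge_0_iff_ge)
  moreover have "k \<le> M/2*(\<beta>-v)^2" using b[of \<beta>] assms by auto
  hence "M/2*h^2 \<le> M/2*(\<beta>-v)^2" using hk by simp
  hence "h^2 \<le> (\<beta>-v)^2" using M0 by (simp add: mult_le_cancel_left_pos)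
  hence "h \<le> \<beta> - v" using h0 assms(2) by (metis power2_commute power2_le_imp_le less_eq_real_def diff_ge_0_iff_ge)
  ultimately have sub: "{v-h..v+h} \<subseteq> {\<alpha>..\<beta>}" by auto
  have cont: "continuous_on {\<alpha>..\<beta>} (\<lambda>x. k - g x)"
    by (intro continuous_intros assms)
  have "integral {v-h..v+h} (\<lambda>x. k - g x) \<le> integral {\<alpha>..\<beta>} (\<lambda>x. k - g x)"
    apply (rule integral_subset_le[OF sub])
    using cont sub integrable_continuous_interval continuous_on_subset apply blast
    using cont integrable_continuous_interval apply blast
    using b by auto
  moreover have "integral {v-h..v+h} (\<lambda>x. k - M/2*(x-v)^2) \<le> integral {v-h..v+h} (\<lambda>x. k - g x)"
    apply (rule integral_le)
    apply (rule integrable_continuous_interval, intro continuous_intros)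
    using cont sub integrable_continuous_interval continuous_on_subset apply blast
    using b sub by auto
  moreover have "integral {v-h..v+h} (\<lambda>x. k - M/2*(x-v)^2) = 4/3*k*h"
    using quad_integral[of "M/2" h k v] M0 h0 hk by (simp add: integral_unique)
  ultimately show "4/3*k* sqrt(2*k/M) \<le> integral {\<alpha>..\<beta>} (\<lambda>x. k - g x)"
    unfolding h_def by linarith
next
  define h where "h = sqrt(2*k/m)"
  have h0: "h \<ge> 0" unfolding h_def using assms by simp
  have hk: "m/2 * h^2 = k" unfolding h_def using assms by simp
  have "m/2*(\<alpha>-v)^2 \<le> k" using b[of \<alpha>] assms by auto
  hence "m/2*(\<alpha>-v)^2 \<le> m/2*h^2" using hk by simp
  hence "(\<alpha>-v)^2 \<le> h^2" using assms(3) by (simp add: mult_le_cancel_left_pos)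
  hence "v - \<alpha> \<le> h" using h0 assms(1) by (metis power2_commute power2_le_imp_le less_eq_real_def diff_ge_0_iff_ge)
  moreover have "m/2*(\<beta>-v)^2 \<le> k" using b[of \<beta>] assms by auto
  hence "m/2*(\<beta>-v)^2 \<le> m/2*h^2" using hk by simp
  hence "(\<beta>-v)^2 \<le> h^2" using assms(3) by (simp add: mult_le_cancel_left_pos)
  hence "\<beta> - v \<le> h" using h0 assms(2) by (metis power2_commute power2_le_imp_le less_eq_real_def diff_ge_0_iff_ge)
  ultimately have sub: "{\<alpha>..\<beta>} \<subseteq> {v-h..v+h}" by auto
  have cont: "continuous_on {\<alpha>..\<beta>} (\<lambda>x. k - g x)"
    by (intro continuous_intros assms)
  have "integral {\<alpha>..\<beta>} (\<lambda>x. k - g x) \<le> integral {\<alpha>..\<beta>} (\<lambda>x. k - m/2*(x-v)^2)"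
    apply (rule integral_le)
    using cont integrable_continuous_interval apply blast
    apply (rule integrable_continuous_interval, intro continuous_intros)
    using b by auto
  moreover have "integral {\<alpha>..\<beta>} (\<lambda>x. k - m/2*(x-v)^2) \<le> integral {v-h..v+h} (\<lambda>x. k - m/2*(x-v)^2)"
    apply (rule integral_subset_le[OF sub])
    apply (rule integrable_continuous_interval, intro continuous_intros)
    apply (rule integrable_continuous_interval, intro continuous_intros)
  proof
    fix x assume "x \<in> {v-h..v+h}"
    hence "\<bar>x - v\<bar> \<le> h" by auto
    hence "(x-v)^2 \<le> h^2" by (metis abs_le_square_iff abs_of_nonneg h0)
    hence "m/2*(x-v)^2 \<le> m/2*h^2" using assms(3) by (simp add: mult_le_cancel_left_pos)
    thus "0 \<le> k - m/2*(x-v)^2" using hk by linarith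
  qed
  moreover have "integral {v-h..v+h} (\<lambda>x. k - m/2*(x-v)^2) = 4/3*k*h"
    using quad_integral[of "m/2" h k v] assms h0 hk by (simp add: integral_unique)
  ultimately show "integral {\<alpha>..\<beta>} (\<lambda>x. k - g x) \<le> 4/3*k* sqrt(2*k/m)"
    unfolding h_def by linarith
qed

context
  fixes I :: "real set" and f f' f'' :: "real \<Rightarrow> real"
  assumes I_open: "open I" and I_interval: "is_interval I"
    and d1: "\<And>x. x \<in> I \<Longrightarrow> (f has_real_derivative f' x) (at x)"
    and d2: "\<And>x. x \<in> I \<Longrightarrow> (f' has_real_derivative f'' x) (at x)"
    and cvx: "\<And>x. x \<in> I \<Longrightarrow> f'' x > 0"
begin

lemma interval_sub: assumes "a \<in> I" "b \<in> I" shows "{a..b} \<subseteq> I"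
proof
  fix x assume "x \<in> {a..b}"
  thus "x \<in> I" using I_interval[unfolded is_interval_1, rule_format, OF assms, of x] by simp
qed

lemma taylor2:
  assumes "x \<in> I" "v \<in> I"
  shows "\<exists>t. min x v \<le> t \<and> t \<le> max x v \<and> f x = f v + f' v * (x - v) + f'' t / 2 * (x - v)^2"
proof (cases "x = v")
  case True thus ?thesis by auto
next
  case False
  define diff where "diff = (\<lambda>n::nat. if n = 0 then f else if n = 1 then f' else f'')"
  have sub: "{min x v..max x v} \<subseteq> I" using interval_sub assms
    by (metis max_def min_def order.refl)
  have "\<exists>t. (if x < v then x < t \<and> t < v else v < t \<and> t < x) \<and>
    f x = (\<Sum>m<2. (diff m v / fact m) * (x - v)^m) + (diff 2 t / fact 2) * (x - v)^2"
  proof (rule Taylor[of 2 diff f "min x v" "max x v" v x])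
    show "\<forall>m t. m < 2 \<and> min x v \<le> t \<and> t \<le> max x v \<longrightarrow> DERIV (diff m) t :> diff (Suc m) t"
    proof (intro allI impI)
      fix m :: nat and t :: real assume h: "m < 2 \<and> min x v \<le> t \<and> t \<le> max x v"
      hence tI: "t \<in> I" using sub by auto
      from h have "m = 0 \<or> m = 1" by auto
      thus "DERIV (diff m) t :> diff (Suc m) t"
        using d1[OF tI] d2[OF tI] unfolding diff_def by auto
    qed
  qed (use False in \<open>auto simp: diff_def\<close>)
  then obtain t where t: "(if x < v then x < t \<and> t < v else v < t \<and> t < x)"
    "f x = (\<Sum>m<2. (diff m v / fact m) * (x - v)^m) + (diff 2 t / fact 2) * (x - v)^2" by blast
  have "f x = f v + f' v * (x - v) + f'' t / 2 * (x - v)^2"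
    using t(2) by (simp add: diff_def eval_nat_numeral)
  moreover have "min x v \<le> t \<and> t \<le> max x v" using t(1) by (auto split: if_splits)
  ultimately show ?thesis by blast
qed

lemma f'_mono: "x < y \<Longrightarrow> x \<in> I \<Longrightarrow> y \<in> I \<Longrightarrow> f' x < f' y"
proof (rule DERIV_pos_imp_increasing, assumption)
  fix t assume "x \<in> I" "y \<in> I" "x \<le> t" "t \<le> y"
  hence "t \<in> I" using interval_sub[of x y] by auto
  thus "\<exists>z. DERIV f' t :> z \<and> z > 0" using d2 cvx by blast
qed

lemma D_mono_r:
  assumes "v \<in> I" "x \<in> I" "y \<in> I" "v \<le> x" "x < y"
  shows "f x - f' v * (x - v) < f y - f' v * (y - v)"
proof -
  have sub: "{x..y} \<subseteq> I" using interval_sub assms by auto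
  obtain z where z: "x < z" "z < y" "f y - f x = (y - x) * f' z"
  proof -
    have "\<And>t. x \<le> t \<Longrightarrow> t \<le> y \<Longrightarrow> DERIV f t :> f' t" using d1 sub by auto
    from MVT2[OF assms(5) this] show ?thesis using that by blast
  qed
  have "z \<in> I" using sub z by auto
  hence "f' v < f' z" using f'_mono[of v z] assms z by auto
  hence "(y - x) * f' v < (y - x) * f' z" using assms by simp
  thus ?thesis using z(3) by (simp add: algebra_simps)
qed

lemma D_mono_l:
  assumes "v \<in> I" "x \<in> I" "y \<in> I" "y \<le> v" "x < y"
  shows "f x - f' v * (x - v) > f y - f' v * (y - v)"
proof -
  have sub: "{x..y} \<subseteq> I" using interval_sub assms by auto
  obtain z where z: "x < z" "z < y" "f y - f x = (y - x) * f' z"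
  proof -
    have "\<And>t. x \<le> t \<Longrightarrow> t \<le> y \<Longrightarrow> DERIV f t :> f' t" using d1 sub by auto
    from MVT2[OF assms(5) this] show ?thesis using that by blast
  qed
  have "z \<in> I" using sub z by auto
  hence "f' z < f' v" using f'_mono[of z v] assms z by auto
  hence "(y - x) * f' z < (y - x) * f' v" using assms by simp
  thus ?thesis using z(3) by (simp add: algebra_simps)
qed

lemma contf: "{a..b} \<subseteq> I \<Longrightarrow> continuous_on {a..b} f"
proof -
  assume sub: "{a..b} \<subseteq> I"
  have "\<forall>x\<in>{a..b}. isCont f x" using DERIV_isCont[OF d1] sub by blast
  thus ?thesis by (rule continuous_at_imp_continuous_on)
qed

lemma tangent_eq: "v \<in> I \<Longrightarrow> tangent_line f k v x = f v + k + f' v * (x - v)"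
  unfolding tangent_line_def using DERIV_imp_deriv[OF d1] by simp

lemma local_bounds:
  assumes vI: "v \<in> I" and r: "r > 0" and sub: "{v-r..v+r} \<subseteq> I" and m: "m > 0"
    and mb: "\<And>x. x \<in> {v-r..v+r} \<Longrightarrow> m \<le> f'' x"
    and Mb: "\<And>x. x \<in> {v-r..v+r} \<Longrightarrow> f'' x \<le> M" and k: "k > 0" "k < m/2*r^2"
  shows "\<exists>\<alpha> \<beta>. \<alpha> < \<beta> \<and> {x\<in>I. f x = tangent_line f k v x} = {\<alpha>, \<beta>} \<and>
     integral {\<alpha>..\<beta>} (\<lambda>x. tangent_line f k v x - f x) \<le> 4/3*k* sqrt(2*k/m) \<and>
     4/3*k* sqrt(2*k/M) \<le> integral {\<alpha>..\<beta>} (\<lambda>x. tangent_line f k v x - f x)"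
proof -
  define g where "g = (\<lambda>x. f x - f v - f' v * (x - v))"
  have contg: "continuous_on {a..b} g" if "{a..b} \<subseteq> I" for a b
    unfolding g_def by (intro continuous_intros contf that)
  have gv: "g v = 0" unfolding g_def by simp
  have lowg: "m/2*(x-v)^2 \<le> g x" if "x \<in> {v-r..v+r}" for x
  proof -
    from that sub have xI: "x \<in> I" by auto
    obtain t where t: "min x v \<le> t" "t \<le> max x v" "f x = f v + f' v * (x - v) + f'' t / 2 * (x - v)^2"
      using taylor2[OF xI vI] by blast
    have "t \<in> {v-r..v+r}" using t that by auto
    hence "m \<le> f'' t" using mb by auto
    hence "m/2*(x-v)^2 \<le> f'' t/2*(x-v)^2" by (intro mult_right_mono) auto
    thus ?thesis using t(3) unfolding g_def by simp
  qed
  have vr: "v - r \<in> I" "v + r \<in> I" using sub r by auto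
  have svr: "{v..v+r} \<subseteq> I" "{v-r..v} \<subseteq> I" using sub by auto
  have "g (v+r) > k" using lowg[of "v+r"] r k by auto
  then obtain \<beta> where \<beta>: "v \<le> \<beta>" "\<beta> \<le> v+r" "g \<beta> = k"
    using IVT'[of g v k "v+r"] gv k contg[OF svr(1)] r by auto
  have "g (v-r) > k" using lowg[of "v-r"] r k by auto
  then obtain \<alpha> where \<alpha>: "v-r \<le> \<alpha>" "\<alpha> \<le> v" "g \<alpha> = k"
    using IVT2'[of g v k "v-r"] gv k contg[OF svr(2)] r by auto
  have \<alpha>v: "\<alpha> < v" using \<alpha> gv k by (metis less_eq_real_def less_irrefl)
  have \<beta>v: "v < \<beta>" using \<beta> gv k by (metis less_eq_real_def less_irrefl)
  have \<alpha>I: "\<alpha> \<in> I" "\<beta> \<in> I" using \<alpha> \<beta> sub by auto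
  have tg: "tangent_line f k v x = f v + k + f' v * (x - v)" for x using tangent_eq[OF vI] .
  have gr: "g x < g y" if "x \<in> I" "y \<in> I" "v \<le> x" "x < y" for x y
    using D_mono_r[OF vI that] unfolding g_def by simp
  have gl: "g x > g y" if "x \<in> I" "y \<in> I" "y \<le> v" "x < y" for x y
    using D_mono_l[OF vI that] unfolding g_def by simp
  have set: "{x\<in>I. f x = tangent_line f k v x} = {\<alpha>, \<beta>}"
  proof (rule set_eqI, rule iffI)
    fix x assume "x \<in> {x\<in>I. f x = tangent_line f k v x}"
    hence xI: "x \<in> I" and gx: "g x = k" unfolding tg g_def by auto
    show "x \<in> {\<alpha>, \<beta>}"
    proof (cases "v \<le> x")
      case True
      have "\<not> x < \<beta>" using gr[OF xI \<alpha>I(2) True] gx \<beta> by auto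
      moreover have "\<not> \<beta> < x" using gr[OF \<alpha>I(2) xI] \<beta>v gx \<beta> by auto
      ultimately show ?thesis by auto
    next
      case False
      have "\<not> x < \<alpha>" using gl[OF xI \<alpha>I(1)] \<alpha> gx by auto
      moreover have "\<not> \<alpha> < x" using gl[OF \<alpha>I(1) xI] False gx \<alpha> by auto
      ultimately show ?thesis by auto
    qed
  next
    fix x assume "x \<in> {\<alpha>, \<beta>}"
    thus "x \<in> {x\<in>I. f x = tangent_line f k v x}" using \<alpha>I \<alpha> \<beta> unfolding tg g_def by auto
  qed
  have ieq: "integral {\<alpha>..\<beta>} (\<lambda>x. tangent_line f k v x - f x) = integral {\<alpha>..\<beta>} (\<lambda>x. k - g x)"
    unfolding tg g_def by (simp add: algebra_simps)
  have subab: "{\<alpha>..\<beta>} \<subseteq> {v-r..v+r}" using \<alpha> \<beta> by auto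
  have subI: "{\<alpha>..\<beta>} \<subseteq> I" using subab sub by auto
  have gk: "g x \<le> k" if "x \<in> {\<alpha>..\<beta>}" for x
  proof (cases "v \<le> x")
    case True
    show ?thesis
    proof (cases "x = \<beta>")
      case False
      hence "x < \<beta>" using that by auto
      moreover have "x \<in> I" using that subI by auto
      ultimately show ?thesis using gr[of x \<beta>] \<alpha>I True \<beta> by fastforce
    qed (use \<beta> in auto)
  next
    case False
    show ?thesis
    proof (cases "x = \<alpha>")
      case False
      hence "\<alpha> < x" using that by auto
      moreover have "x \<in> I" using that subI by auto
      ultimately show ?thesis using gl[of \<alpha> x] \<alpha>I \<open>\<not> v \<le> x\<close> \<alpha> by fastforce
    qed (use \<alpha> in auto)
  qed
  have upper: "g x \<le> M/2*(x-v)^2" if "x \<in> {\<alpha>..\<beta>}" for x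
  proof -
    from that subI have xI: "x \<in> I" by auto
    obtain t where t: "min x v \<le> t" "t \<le> max x v" "f x = f v + f' v * (x - v) + f'' t / 2 * (x - v)^2"
      using taylor2[OF xI vI] by blast
    have "t \<in> {v-r..v+r}" using t that subab by auto
    hence "f'' t \<le> M" using Mb by auto
    hence "f'' t/2*(x-v)^2 \<le> M/2*(x-v)^2" by (intro mult_right_mono) auto
    thus ?thesis using t(3) unfolding g_def by simp
  qed
  have mM: "m \<le> M" using Mb[of v] mb[of v] r by auto
  have B: "4/3*k* sqrt(2*k/M) \<le> integral {\<alpha>..\<beta>} (\<lambda>x. k - g x)
     \<and> integral {\<alpha>..\<beta>} (\<lambda>x. k - g x) \<le> 4/3*k* sqrt(2*k/m)"
    apply (rule area_bounds[OF \<alpha>v \<beta>v m mM k(1) contg[OF subI] \<alpha>(3) \<beta>(3)])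
    using lowg subab gk upper by auto
  show ?thesis apply (rule exI[of _ \<alpha>], rule exI[of _ \<beta>]) using B set ieq \<alpha>v \<beta>v by simp
qed
end


lemma nbhd:
  assumes I_open: "open I"
    and d3: "\<And>x. x \<in> I \<Longrightarrow> (f'' has_real_derivative f''' x) (at x)"
    and vI: "v \<in> I" and e: "\<epsilon> > 0"
  shows "\<exists>r>0. {v-r..v+r} \<subseteq> I \<and> (\<forall>x\<in>{v-r..v+r}. \<bar>f'' x - f'' v\<bar> < \<epsilon>)"
proof -
  have "isCont f'' v" using d3[OF vI] by (rule DERIV_isCont)
  then obtain d where d: "d > 0" "\<And>x'. dist x' v < d \<Longrightarrow> dist (f'' x') (f'' v) < \<epsilon>"
    using e unfolding continuous_at_eps_delta by blast
  obtain e where e: "e > 0" "ball v e \<subseteq> I" using I_open vI open_contains_ball by blast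
  define r where "r = min d e / 2"
  have r: "r > 0" "r < d" "r < e" using d e unfolding r_def by auto
  have "{v-r..v+r} \<subseteq> ball v e" using r by (auto simp: dist_real_def)
  moreover have "\<bar>f'' x - f'' v\<bar> < \<epsilon>" if "x \<in> {v-r..v+r}" for x
    using d(2)[of x] that r by (auto simp: dist_real_def)
  ultimately show ?thesis using r e by blast
qed

theorem theorem2:
  fixes I :: "real set" and f f' f'' f''' :: "real \<Rightarrow> real"
  assumes I_open: "open I" and I_interval: "is_interval I" and I_ne: "I \<noteq> {}"
    and d1: "\<And>x. x \<in> I \<Longrightarrow> (f has_real_derivative f' x) (at x)"
    and d2: "\<And>x. x \<in> I \<Longrightarrow> (f' has_real_derivative f'' x) (at x)"
    and d3: "\<And>x. x \<in> I \<Longrightarrow> (f'' has_real_derivative f''' x) (at x)"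
    and c3: "continuous_on I f'''"
    and convex: "\<And>x. x \<in> I \<Longrightarrow> f'' x > 0"
  shows "(\<exists>a b c. \<forall>x\<in>I. f x = a * x ^ 2 + b * x + c) \<longleftrightarrow> condition_B I f"
proof
  assume "\<exists>a b c. \<forall>x\<in>I. f x = a * x ^ 2 + b * x + c"
  then obtain a b c where q: "\<And>x. x \<in> I \<Longrightarrow> f x = a * x ^ 2 + b * x + c" by blast
  have f'eq: "f' x = 2*a*x + b" if xI: "x \<in> I" for x
  proof -
    have "((\<lambda>x. a * x ^ 2 + b * x + c) has_real_derivative (2*a*x + b)) (at x)"
      by (rule derivative_eq_intros refl | simp)+
    hence "(f has_real_derivative (2*a*x + b)) (at x)"
      by (rule has_field_derivative_transform_within_open[OF _ I_open xI]) (use q in auto)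
    thus ?thesis using d1[OF xI] DERIV_unique by blast
  qed
  have f''eq: "f'' x = 2*a" if xI: "x \<in> I" for x
  proof -
    have "((\<lambda>x. 2*a*x + b) has_real_derivative (2*a)) (at x)"
      by (rule derivative_eq_intros refl | simp)+
    hence "(f' has_real_derivative (2*a)) (at x)"
      by (rule has_field_derivative_transform_within_open[OF _ I_open xI]) (use f'eq in auto)
    thus ?thesis using d2[OF xI] DERIV_unique by blast
  qed
  obtain x0 where "x0 \<in> I" using I_ne by blast
  hence a0: "a > 0" using convex[of x0] f''eq[of x0] by simp
  show "condition_B I f"
    unfolding condition_B_def
  proof (intro exI[of _ 1] conjI exI[of _ "\<lambda>k. 4/3*k* sqrt(k/a)"] allI impI ballI, simp)
    fix k v \<alpha> \<beta>
    assume k: "0 < k \<and> k < 1" and vI: "v \<in> I"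
      and ab: "\<alpha> < \<beta> \<and> {x \<in> I. f x = tangent_line f k v x} = {\<alpha>, \<beta>}"
    have tg: "tangent_line f k v x = f v + k + f' v * (x - v)" for x
      using tangent_eq[OF I_open I_interval d1 d2 convex vI] .
    have D: "f x - (f v + f' v * (x - v)) = a * (x - v)^2" if "x \<in> I" for x
      using q[OF that] q[OF vI] f'eq[OF vI] by (simp add: power2_eq_square algebra_simps)
    define h where "h = sqrt (k/a)"
    have h0: "h > 0" unfolding h_def using k a0 by simp
    have hk: "a * h^2 = k" unfolding h_def using k a0 by simp
    have root: "x = v - h \<or> x = v + h" if "x \<in> {\<alpha>, \<beta>}" for x
    proof -
      have xI: "x \<in> I" and fx: "f x = tangent_line f k v x" using that ab by blast+
      have "a * (x - v)^2 = k" using D[OF xI] fx unfolding tg by linarith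
      hence "a * (x - v)^2 = a * h^2" using hk by simp
      hence "(x - v)^2 = h^2" using a0 by auto
      thus ?thesis unfolding power2_eq_iff by auto
    qed
    have \<alpha>\<beta>: "\<alpha> = v - h" "\<beta> = v + h" using root[of \<alpha>] root[of \<beta>] ab h0 by auto
    have \<alpha>\<beta>I: "\<alpha> \<in> I" "\<beta> \<in> I" using ab by blast+
    have sub: "{\<alpha>..\<beta>} \<subseteq> I" using interval_sub[OF I_open I_interval d1 d2 convex \<alpha>\<beta>I] .
    have "integral {\<alpha>..\<beta>} (\<lambda>x. tangent_line f k v x - f x) = integral {\<alpha>..\<beta>} (\<lambda>x. k - a * (x - v)^2)"
      apply (rule integral_cong) using D sub unfolding tg by (smt (verit) subsetD)
    also have "\<dots> = 4/3*k*h"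
      using quad_integral[of a h k v] a0 h0 hk \<alpha>\<beta> by (simp add: integral_unique)
    finally show "integral {\<alpha>..\<beta>} (\<lambda>x. tangent_line f k v x - f x) = 4/3*k* sqrt(k/a)"
      unfolding h_def .
  qed
next
  assume "condition_B I f"
  then obtain \<delta> \<phi> where \<delta>: "\<delta> > 0" and Bh: "\<forall>k. 0 < k \<and> k < \<delta> \<longrightarrow>
        (\<forall>v\<in>I. \<forall>\<alpha> \<beta>. \<alpha> < \<beta> \<and> {x\<in>I. f x = tangent_line f k v x} = {\<alpha>, \<beta>} \<longrightarrow>
            integral {\<alpha>..\<beta>} (\<lambda>x. tangent_line f k v x - f x) = \<phi> k)"
    unfolding condition_B_def by (elim exE conjE) 
  have B: "integral {\<alpha>..\<beta>} (\<lambda>x. tangent_line f k v x - f x) = \<phi> k"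
    if "0 < k" "k < \<delta>" "v \<in> I" "\<alpha> < \<beta>" "{x\<in>I. f x = tangent_line f k v x} = {\<alpha>, \<beta>}" for k v \<alpha> \<beta>
    using Bh that by simp
  have key: False if v1: "v1 \<in> I" and v2: "v2 \<in> I" and lt: "f'' v1 < f'' v2" for v1 v2
  proof -
    define a where "a = f'' v1"
    define b where "b = f'' v2"
    have a0: "a > 0" using convex[OF v1] a_def by simp
    have ab: "a < b" using lt a_def b_def by simp
    define e1 where "e1 = min (a/2) ((b-a)/3)"
    define e2 where "e2 = (b-a)/3"
    have e1: "e1 > 0" "e1 \<le> a/2" "e1 \<le> (b-a)/3"
    proof -
      show "e1 > 0" using a0 ab unfolding e1_def by simp
      show "e1 \<le> a/2" unfolding e1_def by (rule min.cobounded1)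
      show "e1 \<le> (b-a)/3" unfolding e1_def by (rule min.cobounded2)
    qed
    have e2: "e2 > 0" using ab unfolding e2_def by auto
    obtain r1 where r1: "r1 > 0" "{v1-r1..v1+r1} \<subseteq> I" "\<forall>x\<in>{v1-r1..v1+r1}. \<bar>f'' x - a\<bar> < e1"
      using nbhd[OF I_open d3 v1 e1(1)] a_def by blast
    obtain r2 where r2: "r2 > 0" "{v2-r2..v2+r2} \<subseteq> I" "\<forall>x\<in>{v2-r2..v2+r2}. \<bar>f'' x - b\<bar> < e2"
      using nbhd[OF I_open d3 v2 e2] b_def by blast
    define m1 where "m1 = a - e1"
    define M1 where "M1 = a + e1"
    define m2 where "m2 = b - e2"
    define M2 where "M2 = b + e2"
    have m1: "m1 > 0" using e1 a0 unfolding m1_def by auto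
    have m2: "m2 > 0" using ab a0 unfolding m2_def e2_def by auto
    have M1m2: "M1 < m2" using e1 ab unfolding M1_def m2_def e2_def by (simp add: field_simps)
    define k where "k = min (\<delta>/2) (min (m1/2*r1^2) (m2/2*r2^2) / 2)"
    have p: "m1/2*r1^2 > 0" "m2/2*r2^2 > 0" using m1 m2 r1(1) r2(1) by auto
    have q1: "k \<le> \<delta>/2" "k \<le> min (m1/2*r1^2) (m2/2*r2^2) / 2" unfolding k_def by auto
    have q2: "min (m1/2*r1^2) (m2/2*r2^2) \<le> m1/2*r1^2" "min (m1/2*r1^2) (m2/2*r2^2) \<le> m2/2*r2^2"
      "min (m1/2*r1^2) (m2/2*r2^2) > 0" using p by auto
    have "k > 0" unfolding k_def using p \<delta> by auto
    hence k: "k > 0" "k < \<delta>" "k < m1/2*r1^2" "k < m2/2*r2^2"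
      using q1 q2 \<delta> by linarith+
    have mb1: "m1 \<le> f'' x" "f'' x \<le> M1" if "x \<in> {v1-r1..v1+r1}" for x
    proof -
      have "\<bar>f'' x - a\<bar> < e1" using r1(3) that by blast
      thus "m1 \<le> f'' x" "f'' x \<le> M1" unfolding m1_def M1_def by (auto simp: abs_less_iff)
    qed
    have mb2: "m2 \<le> f'' x" "f'' x \<le> M2" if "x \<in> {v2-r2..v2+r2}" for x
    proof -
      have "\<bar>f'' x - b\<bar> < e2" using r2(3) that by blast
      thus "m2 \<le> f'' x" "f'' x \<le> M2" unfolding m2_def M2_def by (auto simp: abs_less_iff)
    qed
    obtain \<alpha>1 \<beta>1 where L1: "\<alpha>1 < \<beta>1" "{x\<in>I. f x = tangent_line f k v1 x} = {\<alpha>1, \<beta>1}"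
      "4/3*k* sqrt(2*k/M1) \<le> integral {\<alpha>1..\<beta>1} (\<lambda>x. tangent_line f k v1 x - f x)"
      using local_bounds[OF I_open I_interval d1 d2 convex v1 r1(1) r1(2) m1 mb1(1) mb1(2) k(1) k(3)]
      by blast
    obtain \<alpha>2 \<beta>2 where L2: "\<alpha>2 < \<beta>2" "{x\<in>I. f x = tangent_line f k v2 x} = {\<alpha>2, \<beta>2}"
      "integral {\<alpha>2..\<beta>2} (\<lambda>x. tangent_line f k v2 x - f x) \<le> 4/3*k* sqrt(2*k/m2)"
      using local_bounds[OF I_open I_interval d1 d2 convex v2 r2(1) r2(2) m2 mb2(1) mb2(2) k(1) k(4)]
      by blast
    have "4/3*k* sqrt(2*k/M1) \<le> 4/3*k* sqrt(2*k/m2)"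
      using L1 L2 B[OF k(1) k(2) v1 L1(1) L1(2)] B[OF k(1) k(2) v2 L2(1) L2(2)] by linarith
    hence "sqrt(2*k/M1) \<le> sqrt(2*k/m2)" using k(1) by simp
    hence "2*k/M1 \<le> 2*k/m2" by simp
    moreover have "M1 > 0" using a0 e1 unfolding M1_def by simp
    hence "2*k/m2 < 2*k/M1" using M1m2 k(1) by (intro divide_strict_left_mono) auto
    ultimately show False by simp
  qed
  obtain x0 where x0: "x0 \<in> I" using I_ne by blast
  define C where "C = f'' x0"
  have fC: "f'' x = C" if "x \<in> I" for x
    using key[OF that x0] key[OF x0 that] unfolding C_def by fastforce
  have cvI: "convex I" using I_interval by (rule is_interval_convex)
  obtain c1 where c1: "\<And>x. x \<in> I \<Longrightarrow> f' x - C * x = c1"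
  proof -
    have "\<exists>c. \<forall>x\<in>I. f' x - C * x = c"
    proof (rule has_field_derivative_zero_constant[OF cvI])
      fix x assume xI: "x \<in> I"
      have "((\<lambda>x. f' x - C * x) has_real_derivative (f'' x - C)) (at x)"
        by (rule derivative_eq_intros d2[OF xI] refl | simp)+
      thus "((\<lambda>x. f' x - C * x) has_real_derivative 0) (at x within I)"
        using fC[OF xI] by (simp add: has_field_derivative_at_within)
    qed
    thus ?thesis using that by blast
  qed
  have "\<exists>c. \<forall>x\<in>I. f x - C/2 * x^2 - c1 * x = c"
  proof (rule has_field_derivative_zero_constant[OF cvI])
    fix x assume xI: "x \<in> I"
    have "((\<lambda>x. f x - C/2 * x^2 - c1 * x) has_real_derivative (f' x - C/2 * (2 * x) - c1)) (at x)"
      by (rule derivative_eq_intros d1[OF xI] refl | simp)+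
    thus "((\<lambda>x. f x - C/2 * x^2 - c1 * x) has_real_derivative 0) (at x within I)"
      using c1[OF xI] by (simp add: has_field_derivative_at_within)
  qed
  then obtain c where "\<forall>x\<in>I. f x - C/2 * x^2 - c1 * x = c" by blast
  hence "\<forall>x\<in>I. f x = C/2 * x^2 + c1 * x + c" by (auto simp: algebra_simps)
  thus "\<exists>a b c. \<forall>x\<in>I. f x = a * x ^ 2 + b * x + c" by blast
qed

end
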